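(* Let $\mathcal{X}\subseteq\mathbb{R}^d$ be a nonempty compact convex set and let $f:\mathbb{R}^d\to\mathbb{R}$ be Lipschitz continuous and Clarke regular (for all $x,v$ the limit $f'(x;v)=\lim_{t\downarrow0}\frac{f(x+tv)-f(x)}{t}$ exists). Fix $\lambda>0$ and let $r(\lambda)\ge0$, where $r:(0,\infty)\to[0,\infty)$ is a function with $r(\lambda)\to0$ as $\lambda\to0$ such that $\nabla f_\lambda(x)\in\partial f(x)+B(0,r(\lambda))$ for all $x\in\mathcal{X}$, with $f_\lambda(x)=\mathbb{E}_{u\sim\mathcal{N}(0,I)}[f(x+\lambda u)]$. For $(x,y)\in\mathcal{X}\times\mathbb{R}^d$ define $$\hat{\mathcal{N}}_{\mathcal{X}}(x)=\{\eta\in\mathcal{N}_{\mathcal{X}}(x):\ \|\eta\|\le 2\|y\|\},\qquad H_1(x,y)=-\big(y+\hat{\mathcal{N}}_{\mathcal{X}}(x)\big),\qquad H_2(x,y)=-\big(y-\partial f(x)\big)+B(0,r(\lambda)).$$ Then $H_1$ and $H_2$ are Marchaud maps on $\mathcal{X}\times\mathbb{R}^d$.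
   Context: $\mathcal{N}_{\mathcal{X}}(x)$ is the normal cone of the convex set $\mathcal{X}$ at $x\in\mathcal{X}$; note $\hat{\mathcal{N}}_{\mathcal{X}}(x)$ depends on $y$ as well. $\partial f(x)$ is the Clarke subdifferential of $f$ at $x$ ($\overline{\mathrm{conv}}$ of limits of gradients $\nabla f(x_k)$ along sequences $x_k\to x$ of differentiability points). $B(0,\rho)$ is the closed ball of radius $\rho$ about $0$; set sums are Minkowski sums, so $-(y-\partial f(x))=\{-y+g: g\in\partial f(x)\}$. A set-valued map $H$ defined on pairs $(x,y)$ is Marchaud if: (a) each $H(x,y)$ is nonempty, convex and compact; (b) there is $K>0$ with $\sup_{z\in H(x,y)}\|z\|\le K(1+\|x\|+\|y\|)$ for all $(x,y)$; (c) it is upper semicontinuous in the sense that whenever $(x_n,y_n)\to(x,y)$, $z_n\in H(x_n,y_n)$ and $z_n\to z$, then $z\in H(x,y)$. *)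

theory Defs
  imports "HOL-Analysis.Analysis"
begin

definition has_grad :: "('a::euclidean_space \<Rightarrow> real) \<Rightarrow> 'a \<Rightarrow> 'a \<Rightarrow> bool" where
  "has_grad f g x \<longleftrightarrow> (f has_derivative (\<lambda>h. g \<bullet> h)) (at x)"

definition clarke_subdiff :: "('a::euclidean_space \<Rightarrow> real) \<Rightarrow> 'a \<Rightarrow> 'a set" where
  "clarke_subdiff f x = closure (convex hull
     {g. \<exists>xs gs. (xs \<longlonglongrightarrow> x) \<and> (\<forall>k. has_grad f (gs k) (xs k)) \<and> (gs \<longlonglongrightarrow> g)})"

definition clarke_regular :: "('a::euclidean_space \<Rightarrow> real) \<Rightarrow> bool" where
  "clarke_regular f \<longleftrightarrow>
     (\<forall>x v. \<exists>l. ((\<lambda>t. (f (x + t *\<^sub>R v) - f x) / t) \<longlongrightarrow> l) (at_right 0))"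

definition normal_cone :: "'a::euclidean_space set \<Rightarrow> 'a \<Rightarrow> 'a set" where
  "normal_cone X x = {\<eta>. \<forall>z\<in>X. \<eta> \<bullet> (z - x) \<le> 0}"

definition std_gaussian :: "'a::euclidean_space measure" where
  "std_gaussian = density lborel
     (\<lambda>u. ennreal ((2 * pi) powr (- real DIM('a) / 2) * exp (- (norm u)\<^sup>2 / 2)))"

definition gauss_smooth :: "('a::euclidean_space \<Rightarrow> real) \<Rightarrow> real \<Rightarrow> 'a \<Rightarrow> real" where
  "gauss_smooth f lam x = integral\<^sup>L std_gaussian (\<lambda>u. f (x + lam *\<^sub>R u))"

definition marchaud :: "('a::euclidean_space \<times> 'a) set \<Rightarrow> ('a \<Rightarrow> 'a \<Rightarrow> 'a set) \<Rightarrow> bool" where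
  "marchaud S H \<longleftrightarrow>
     (\<forall>(x, y)\<in>S. H x y \<noteq> {} \<and> convex (H x y) \<and> compact (H x y)) \<and>
     (\<exists>K>0. \<forall>(x, y)\<in>S. \<forall>z\<in>H x y. norm z \<le> K * (1 + norm x + norm y)) \<and>
     (\<forall>xs ys zs x y z. (\<forall>n. (xs n, ys n) \<in> S \<and> zs n \<in> H (xs n) (ys n)) \<and>
        (xs \<longlonglongrightarrow> x) \<and> (ys \<longlonglongrightarrow> y) \<and> (zs \<longlonglongrightarrow> z) \<and> (x, y) \<in> S
        \<longrightarrow> z \<in> H x y)"

end

theory Submission
  imports Defs
begin

lemma grad_bound:
  fixes f :: "'a::euclidean_space \<Rightarrow> real"
  assumes L: "L-lipschitz_on UNIV f" and g: "has_grad f g x"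
  shows "norm g \<le> L"
proof -
  have L0: "L \<ge> 0" using L by (simp add: lipschitz_on_def)
  have d1: "((\<lambda>t::real. x + t *\<^sub>R g) has_derivative (\<lambda>t. t *\<^sub>R g)) (at 0)"
    by (auto intro!: derivative_eq_intros)
  have d2: "(f has_derivative (\<lambda>h. g \<bullet> h)) (at (x + 0 *\<^sub>R g))"
    using g by (simp add: has_grad_def)
  have "((\<lambda>t. f (x + t *\<^sub>R g)) has_derivative (\<lambda>t. g \<bullet> (t *\<^sub>R g))) (at 0)"
    using has_derivative_compose[OF d1 d2] by simp
  then have "((\<lambda>t. f (x + t *\<^sub>R g)) has_real_derivative (g \<bullet> g)) (at 0)"
    unfolding has_field_derivative_def by (rule has_derivative_eq_rhs) (auto simp: fun_eq_iff)
  then have lim: "((\<lambda>t. (f (x + t *\<^sub>R g) - f x) / t) \<longlongrightarrow> g \<bullet> g) (at 0)"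
    by (simp add: DERIV_def)
  have "((\<lambda>t. \<bar>(f (x + t *\<^sub>R g) - f x) / t\<bar>) \<longlongrightarrow> \<bar>g \<bullet> g\<bar>) (at 0)"
    by (rule tendsto_rabs[OF lim])
  moreover have "eventually (\<lambda>t. \<bar>(f (x + t *\<^sub>R g) - f x) / t\<bar> \<le> L * norm g) (at (0::real))"
  proof (rule eventually_at_filter[THEN iffD2], rule always_eventually, intro allI impI)
    fix t :: real assume "t \<noteq> 0"
    have "\<bar>f (x + t *\<^sub>R g) - f x\<bar> \<le> L * dist (x + t *\<^sub>R g) x"
      using L unfolding lipschitz_on_def dist_real_def by blast
    also have "\<dots> = L * (\<bar>t\<bar> * norm g)" by (simp add: dist_norm)
    finally show "\<bar>(f (x + t *\<^sub>R g) - f x) / t\<bar> \<le> L * norm g"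
      using \<open>t \<noteq> 0\<close> by (simp add: abs_divide divide_le_eq mult_ac)
  qed
  ultimately have "\<bar>g \<bullet> g\<bar> \<le> L * norm g"
    by (rule tendsto_upperbound) simp
  then have "norm g * norm g \<le> L * norm g"
    by (simp add: dot_square_norm power2_eq_square)
  then show ?thesis using L0
    by (cases "g = 0") (auto simp: mult_le_cancel_right)
qed

definition climits :: "('a::euclidean_space \<Rightarrow> real) \<Rightarrow> 'a \<Rightarrow> 'a set" where
  "climits f x = {g. \<exists>xs gs. (xs \<longlonglongrightarrow> x) \<and> (\<forall>k. has_grad f (gs k) (xs k)) \<and> (gs \<longlonglongrightarrow> g)}"

lemma clarke_eq: "clarke_subdiff f x = closure (convex hull (climits f x))"
  by (simp add: clarke_subdiff_def climits_def)

lemma climits_bound: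
  assumes L: "L-lipschitz_on UNIV f" and s: "s \<in> climits f x"
  shows "norm s \<le> L"
proof -
  obtain xs gs where "\<forall>k. has_grad f (gs k) (xs k)" "gs \<longlonglongrightarrow> s"
    using s by (auto simp: climits_def)
  then show ?thesis
    using grad_bound[OF L]
    by (intro tendsto_upperbound[OF tendsto_norm[of gs s]]) (auto intro!: always_eventually)
qed

lemma clarke_sub_cball:
  assumes L: "L-lipschitz_on UNIV f"
  shows "clarke_subdiff f x \<subseteq> cball 0 L"
proof -
  have "climits f x \<subseteq> cball 0 L" using climits_bound[OF L] by auto
  then have "convex hull (climits f x) \<subseteq> cball 0 L"
    by (intro hull_minimal) auto
  then show ?thesis unfolding clarke_eq by (intro closure_minimal) auto
qed

lemma clarke_compact:
  assumes L: "L-lipschitz_on UNIV f"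
  shows "compact (clarke_subdiff f x)"
  unfolding compact_eq_bounded_closed
  using clarke_sub_cball[OF L, of x] bounded_subset[OF bounded_cball]
  by (auto simp: clarke_eq)

lemma clarke_convex: "convex (clarke_subdiff f x)"
  by (simp add: clarke_eq convex_closure)

lemma clarke_local:
  fixes f :: "'a::euclidean_space \<Rightarrow> real"
  assumes L: "L-lipschitz_on UNIV f"
    and ab: "\<forall>s\<in>climits f x. a \<bullet> s > b" and bb: "b' < b"
  shows "\<exists>\<delta>>0. \<forall>w g. dist w x < \<delta> \<longrightarrow> has_grad f g w \<longrightarrow> a \<bullet> g > b'"
proof (rule ccontr)
  assume nt: "\<not> ?thesis"
  have "\<forall>k::nat. \<exists>w g. dist w x < inverse (real (Suc k)) \<and> has_grad f g w \<and> a \<bullet> g \<le> b'"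
  proof
    fix k :: nat
    have ip: "inverse (real (Suc k)) > 0" by simp
    show "\<exists>w g. dist w x < inverse (real (Suc k)) \<and> has_grad f g w \<and> a \<bullet> g \<le> b'"
    proof (rule ccontr)
      assume "\<not> (\<exists>w g. dist w x < inverse (real (Suc k)) \<and> has_grad f g w \<and> a \<bullet> g \<le> b')"
      then have "\<forall>w g. dist w x < inverse (real (Suc k)) \<longrightarrow> has_grad f g w \<longrightarrow> a \<bullet> g > b'"
        by (simp add: not_le)
      then have "\<exists>\<delta>>0. \<forall>w g. dist w x < \<delta> \<longrightarrow> has_grad f g w \<longrightarrow> a \<bullet> g > b'"
        using ip by (intro exI[where x="inverse (real (Suc k))"] conjI)
      with nt show False by contradiction
    qed
  qed
  then have "\<exists>W. \<forall>k. \<exists>g. dist (W k) x < inverse (real (Suc k)) \<and> has_grad f g (W k) \<and> a \<bullet> g \<le> b'"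
    by (rule choice)
  then obtain W where "\<forall>k. \<exists>g. dist (W k) x < inverse (real (Suc k)) \<and> has_grad f g (W k) \<and> a \<bullet> g \<le> b'"
    by blast
  then have "\<exists>G. \<forall>k. dist (W k) x < inverse (real (Suc k)) \<and> has_grad f (G k) (W k) \<and> a \<bullet> G k \<le> b'"
    by (rule choice)
  then obtain G where WG': "\<forall>k. dist (W k) x < inverse (real (Suc k)) \<and> has_grad f (G k) (W k) \<and> a \<bullet> G k \<le> b'"
    by blast
  then have WG: "\<And>k. dist (W k) x < inverse (real (Suc k))"
     "\<And>k. has_grad f (G k) (W k)" "\<And>k. a \<bullet> G k \<le> b'"
    by blast+
  have "\<forall>k. G k \<in> cball 0 L" using grad_bound[OF L WG(2)] by auto
  then obtain l r where r: "strict_mono r" "(G \<circ> r) \<longlonglongrightarrow> l" "l \<in> cball 0 L"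
    by (rule seq_compactE[OF compact_imp_seq_compact[OF compact_cball]])
  have W: "W \<longlonglongrightarrow> x"
  proof (rule tendsto_dist_iff[THEN iffD2], rule Lim_null_comparison[OF _ LIMSEQ_inverse_real_of_nat])
    have "\<forall>k. norm (dist (W k) x) \<le> inverse (real (Suc k))"
    proof
      fix k
      show "norm (dist (W k) x) \<le> inverse (real (Suc k))"
        unfolding real_norm_def abs_of_nonneg[OF zero_le_dist] by (rule less_imp_le[OF WG(1)])
    qed
    then show "\<forall>\<^sub>F k in sequentially. norm (dist (W k) x) \<le> inverse (real (Suc k))"
      by (rule always_eventually)
  qed
  have "l \<in> climits f x"
    unfolding climits_def
  proof (intro CollectI exI conjI allI)
    show "(W \<circ> r) \<longlonglongrightarrow> x" by (rule LIMSEQ_subseq_LIMSEQ[OF W r(1)])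
    show "(G \<circ> r) \<longlonglongrightarrow> l" by (rule r(2))
    fix k show "has_grad f ((G \<circ> r) k) ((W \<circ> r) k)" using WG(2) by simp
  qed
  then have bl: "b < a \<bullet> l" using ab by blast
  have "\<forall>k. a \<bullet> (G \<circ> r) k \<le> b'" using WG(3) by simp
  then have "a \<bullet> l \<le> b'"
    by (intro tendsto_upperbound[OF tendsto_inner[OF tendsto_const r(2)]] always_eventually) simp_all
  then show False using bl bb by linarith
qed

lemma clarke_usc:
  fixes f :: "'a::euclidean_space \<Rightarrow> real"
  assumes L: "L-lipschitz_on UNIV f"
    and xs: "xs \<longlonglongrightarrow> x" and gs: "\<And>n. gs n \<in> clarke_subdiff f (xs n)" and g: "gs \<longlonglongrightarrow> g"
  shows "g \<in> clarke_subdiff f x"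
proof (rule ccontr)
  assume ng: "g \<notin> clarke_subdiff f x"
  obtain a b where ab: "a \<bullet> g < b" "\<forall>c\<in>clarke_subdiff f x. a \<bullet> c > b"
    using separating_hyperplane_closed_point[OF clarke_convex closed_closure[of "convex hull climits f x", folded clarke_eq] ng]
    by blast
  define b' where "b' = (a \<bullet> g + b) / 2"
  have "climits f x \<subseteq> clarke_subdiff f x"
    unfolding clarke_eq by (rule order_trans[OF hull_subset closure_subset])
  then have "\<forall>s\<in>climits f x. a \<bullet> s > b" using ab by blast
  obtain \<delta> where d: "\<delta> > 0" "\<And>w h. dist w x < \<delta> \<Longrightarrow> has_grad f h w \<Longrightarrow> a \<bullet> h > b'"
  proof -
    have "b' < b" using ab(1) by (simp add: b'_def)
    from clarke_local[OF L \<open>\<forall>s\<in>climits f x. a \<bullet> s > b\<close> this]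
    obtain \<delta> where "\<delta> > 0" "\<forall>w h. dist w x < \<delta> \<longrightarrow> has_grad f h w \<longrightarrow> a \<bullet> h > b'"
      by blast
    then show ?thesis using that by blast
  qed
  have ev: "eventually (\<lambda>n. dist (xs n) x < \<delta>/2) sequentially"
    using d(1) by (intro tendstoD[OF xs]) simp
  have "eventually (\<lambda>n. b' \<le> a \<bullet> gs n) sequentially"
    using ev
  proof eventually_elim
    case (elim n)
    have "climits f (xs n) \<subseteq> {c. a \<bullet> c \<ge> b'}"
    proof
      fix s assume "s \<in> climits f (xs n)"
      then obtain ws hs where w: "ws \<longlonglongrightarrow> xs n" "\<And>k. has_grad f (hs k) (ws k)" "hs \<longlonglongrightarrow> s"
        by (auto simp: climits_def)
      have "eventually (\<lambda>k. dist (ws k) (xs n) < \<delta>/2) sequentially"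
        using d(1) by (intro tendstoD[OF w(1)]) simp
      then have "eventually (\<lambda>k. b' \<le> a \<bullet> hs k) sequentially"
      proof eventually_elim
        case (elim k)
        then have "dist (ws k) x < \<delta>" using \<open>dist (xs n) x < \<delta> / 2\<close>
          dist_triangle[of "ws k" x "xs n"] by linarith
        then show ?case by (rule less_imp_le[OF d(2)[OF _ w(2)]])
      qed
      then have "b' \<le> a \<bullet> s"
        by (rule tendsto_lowerbound[OF tendsto_inner[OF tendsto_const w(3)]]) simp
      then show "s \<in> {c. a \<bullet> c \<ge> b'}" by simp
    qed
    then have "convex hull (climits f (xs n)) \<subseteq> {c. a \<bullet> c \<ge> b'}"
      by (intro hull_minimal convex_halfspace_ge)
    then have "clarke_subdiff f (xs n) \<subseteq> {c. a \<bullet> c \<ge> b'}"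
      unfolding clarke_eq by (intro closure_minimal closed_halfspace_ge)
    then show ?case using gs[of n] by auto
  qed
  then have "b' \<le> a \<bullet> g"
    by (rule tendsto_lowerbound[OF tendsto_inner[OF tendsto_const g]]) simp
  then show False using ab(1) b'_def by simp
qed

lemma normal_cone_closed_convex: "closed (normal_cone X x) \<and> convex (normal_cone X x)"
proof -
  have e: "normal_cone X x = (\<Inter>z\<in>X. {\<eta>. (z - x) \<bullet> \<eta> \<le> 0})"
    by (auto simp: normal_cone_def inner_commute)
  show ?thesis unfolding e
    by (auto intro!: closed_INT convex_INT closed_halfspace_le convex_halfspace_le)
qed

lemma H1_marchaud:
  fixes X :: "'a::euclidean_space set"
  shows "marchaud (X \<times> UNIV)
           (\<lambda>x y. {- (y + \<eta>) | \<eta>. \<eta> \<in> normal_cone X x \<and> norm \<eta> \<le> 2 * norm y})"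
  unfolding marchaud_def
proof (intro conjI)
  show "\<forall>(x, y)\<in>X \<times> UNIV. {- (y + \<eta>) | \<eta>. \<eta> \<in> normal_cone X x \<and> norm \<eta> \<le> 2 * norm y} \<noteq> {} \<and>
     convex {- (y + \<eta>) | \<eta>. \<eta> \<in> normal_cone X x \<and> norm \<eta> \<le> 2 * norm y} \<and>
     compact {- (y + \<eta>) | \<eta>. \<eta> \<in> normal_cone X x \<and> norm \<eta> \<le> 2 * norm y}"
  proof (clarify)
    fix x y :: 'a assume "x \<in> X"
    define S where "S = normal_cone X x \<inter> cball 0 (2 * norm y)"
    have eq: "{- (y + \<eta>) | \<eta>. \<eta> \<in> normal_cone X x \<and> norm \<eta> \<le> 2 * norm y}
        = (\<lambda>\<eta>. - y + (-1) *\<^sub>R \<eta>) ` S"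
      by (auto simp: S_def)
    have a1: "0 \<in> S" by (simp add: S_def normal_cone_def)
    have a2: "convex S" using normal_cone_closed_convex[of X x]
      by (simp add: S_def convex_Int)
    have a3: "compact S" using normal_cone_closed_convex[of X x]
      by (simp add: S_def closed_Int_compact)
    have "compact ((\<lambda>\<eta>. - y + (-1) *\<^sub>R \<eta>) ` S)"
      by (rule compact_continuous_image[OF _ a3]) (intro continuous_intros)
    moreover have "convex ((\<lambda>\<eta>. - y + (-1) *\<^sub>R \<eta>) ` S)" by (rule convex_affinity[OF a2])
    moreover have "(\<lambda>\<eta>. - y + (-1) *\<^sub>R \<eta>) ` S \<noteq> {}" using a1 by blast
    ultimately show "{- (y + \<eta>) | \<eta>. \<eta> \<in> normal_cone X x \<and> norm \<eta> \<le> 2 * norm y} \<noteq> {} \<and>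
     convex {- (y + \<eta>) | \<eta>. \<eta> \<in> normal_cone X x \<and> norm \<eta> \<le> 2 * norm y} \<and>
     compact {- (y + \<eta>) | \<eta>. \<eta> \<in> normal_cone X x \<and> norm \<eta> \<le> 2 * norm y}"
      unfolding eq by blast
  qed
next
  show "\<exists>K>0. \<forall>(x, y)\<in>X \<times> UNIV. \<forall>z\<in>{- (y + \<eta>) | \<eta>. \<eta> \<in> normal_cone X x \<and> norm \<eta> \<le> 2 * norm y}.
      norm z \<le> K * (1 + norm x + norm y)"
  proof (intro exI[of _ 3] conjI ballI, simp, clarify)
    fix x y \<eta> :: 'a assume h: "norm \<eta> \<le> 2 * norm y"
    have "norm (- (y + \<eta>)) \<le> norm y + norm \<eta>" by (simp only: norm_minus_cancel norm_triangle_ineq)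
    then show "norm (- (y + \<eta>)) \<le> 3 * (1 + norm x + norm y)"
    proof -
      have "norm (- (y + \<eta>)) \<le> 3 * norm y" using \<open>norm (- (y + \<eta>)) \<le> norm y + norm \<eta>\<close> h by linarith
      also have "\<dots> \<le> 3 * (1 + norm x + norm y)" by simp
      finally show ?thesis .
    qed
  qed
next
  show "\<forall>xs ys zs x y z.
       (\<forall>n. (xs n, ys n) \<in> X \<times> UNIV \<and>
            zs n \<in> {- (ys n + \<eta>) | \<eta>. \<eta> \<in> normal_cone X (xs n) \<and> norm \<eta> \<le> 2 * norm (ys n)}) \<and>
       xs \<longlonglongrightarrow> x \<and> ys \<longlonglongrightarrow> y \<and> zs \<longlonglongrightarrow> z \<and> (x, y) \<in> X \<times> UNIV \<longrightarrow>
       z \<in> {- (y + \<eta>) | \<eta>. \<eta> \<in> normal_cone X x \<and> norm \<eta> \<le> 2 * norm y}"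
  proof (intro allI impI, elim conjE)
    fix xs ys zs :: "nat \<Rightarrow> 'a" and x y z :: 'a
    assume H: "\<forall>n. (xs n, ys n) \<in> X \<times> UNIV \<and>
            zs n \<in> {- (ys n + \<eta>) | \<eta>. \<eta> \<in> normal_cone X (xs n) \<and> norm \<eta> \<le> 2 * norm (ys n)}"
      and xs: "xs \<longlonglongrightarrow> x" and ys: "ys \<longlonglongrightarrow> y" and zs: "zs \<longlonglongrightarrow> z"
    define E where "E n = - zs n - ys n" for n
    have E: "E n \<in> normal_cone X (xs n) \<and> norm (E n) \<le> 2 * norm (ys n)" for n
      using H[rule_format, of n] by (auto simp: E_def)
    have EL: "E \<longlonglongrightarrow> - z - y" unfolding E_def by (intro tendsto_intros zs ys)
    have "(- z - y) \<in> normal_cone X x"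
      unfolding normal_cone_def
    proof (intro CollectI ballI)
      fix w assume "w \<in> X"
      have "(\<lambda>n. E n \<bullet> (w - xs n)) \<longlonglongrightarrow> (- z - y) \<bullet> (w - x)"
        by (intro tendsto_intros EL xs)
      moreover have "\<forall>n. E n \<bullet> (w - xs n) \<le> 0"
        using E \<open>w \<in> X\<close> by (auto simp: normal_cone_def)
      ultimately show "(- z - y) \<bullet> (w - x) \<le> 0"
        by (intro tendsto_upperbound[where F=sequentially]) (auto intro: always_eventually)
    qed
    moreover have "norm (- z - y) \<le> 2 * norm y"
    proof -
      have "(\<lambda>n. norm (E n) - 2 * norm (ys n)) \<longlonglongrightarrow> norm (- z - y) - 2 * norm y"
        by (intro tendsto_intros EL ys)
      then have "norm (- z - y) - 2 * norm y \<le> 0"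
        using E by (intro tendsto_upperbound[where F=sequentially]) (auto intro: always_eventually)
      then show ?thesis by simp
    qed
    ultimately show "z \<in> {- (y + \<eta>) | \<eta>. \<eta> \<in> normal_cone X x \<and> norm \<eta> \<le> 2 * norm y}"
      by (intro CollectI exI[of _ "- z - y"]) auto
  qed
qed

lemma H2_marchaud:
  fixes X :: "'a::euclidean_space set" and f :: "'a \<Rightarrow> real"
  assumes L: "L-lipschitz_on UNIV f" and r0: "r0 \<ge> 0"
    and ne: "\<And>x. x \<in> X \<Longrightarrow> clarke_subdiff f x \<noteq> {}"
  shows "marchaud (X \<times> UNIV)
           (\<lambda>x y. {- (y - g) + b | g b. g \<in> clarke_subdiff f x \<and> b \<in> cball 0 r0})"
  unfolding marchaud_def
proof (intro conjI)
  have L0: "L \<ge> 0" using L by (simp add: lipschitz_on_def)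
  show "\<forall>(x, y)\<in>X \<times> UNIV. {- (y - g) + b | g b. g \<in> clarke_subdiff f x \<and> b \<in> cball 0 r0} \<noteq> {} \<and>
     convex {- (y - g) + b | g b. g \<in> clarke_subdiff f x \<and> b \<in> cball 0 r0} \<and>
     compact {- (y - g) + b | g b. g \<in> clarke_subdiff f x \<and> b \<in> cball 0 r0}"
  proof (clarify)
    fix x y :: 'a assume "x \<in> X"
    define D where "D = (+) (- y) ` clarke_subdiff f x"
    have eq1: "{- (y - g) + b | g b. g \<in> clarke_subdiff f x \<and> b \<in> cball 0 r0}
        = {u + v | u v. u \<in> D \<and> v \<in> cball 0 r0}"
      by (auto simp: D_def)
    have eq2: "{u + v | u v. u \<in> D \<and> v \<in> cball 0 r0} = (\<Union>u\<in>D. \<Union>v\<in>cball 0 r0. {u + v})"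
      by blast
    have cD: "compact D" unfolding D_def by (rule compact_translation[OF clarke_compact[OF L]])
    have vD: "convex D" unfolding D_def by (rule convex_translation[OF clarke_convex])
    obtain c where c: "c \<in> clarke_subdiff f x" using ne[OF \<open>x \<in> X\<close>] by blast
    have "- (y - c) + 0 \<in> {- (y - g) + b | g b. g \<in> clarke_subdiff f x \<and> b \<in> cball 0 r0}"
      using c r0 by (intro CollectI exI[of _ c] exI[of _ "0::'a"]) simp
    moreover have "compact {u + v | u v. u \<in> D \<and> v \<in> cball 0 r0}"
      by (rule compact_sums[OF cD compact_cball])
    moreover have "convex {u + v | u v. u \<in> D \<and> v \<in> cball 0 r0}"
      unfolding eq2 by (rule convex_sums[OF vD convex_cball])
    ultimately show "{- (y - g) + b | g b. g \<in> clarke_subdiff f x \<and> b \<in> cball 0 r0} \<noteq> {} \<and>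
     convex {- (y - g) + b | g b. g \<in> clarke_subdiff f x \<and> b \<in> cball 0 r0} \<and>
     compact {- (y - g) + b | g b. g \<in> clarke_subdiff f x \<and> b \<in> cball 0 r0}"
      unfolding eq1 by blast
  qed
next
  have L0: "L \<ge> 0" using L by (simp add: lipschitz_on_def)
  show "\<exists>K>0. \<forall>(x, y)\<in>X \<times> UNIV. \<forall>z\<in>{- (y - g) + b | g b. g \<in> clarke_subdiff f x \<and> b \<in> cball 0 r0}.
      norm z \<le> K * (1 + norm x + norm y)"
  proof (intro exI[of _ "L + r0 + 1"] conjI)
    show "L + r0 + 1 > 0" using L0 r0 by simp
  next
  have H: "norm z \<le> (L + r0 + 1) * (1 + norm x + norm y)"
    if z: "z \<in> {- (y - g) + b | g b. g \<in> clarke_subdiff f x \<and> b \<in> cball 0 r0}" for x y z :: 'a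
  proof -
    obtain g b where zg: "z = - (y - g) + b" "g \<in> clarke_subdiff f x" "b \<in> cball 0 r0"
      using z by blast
    have "g \<in> cball 0 L" using clarke_sub_cball[OF L, of x] zg(2) by blast
    then have ng: "norm g \<le> L" by simp
    have nb: "norm b \<le> r0" using zg(3) by simp
    have "norm z \<le> norm (- (y - g)) + norm b"
      unfolding zg(1) by (rule norm_triangle_ineq)
    moreover have "norm (- (y - g)) \<le> norm y + norm g"
      using norm_triangle_ineq4[of y g] by (simp add: norm_minus_commute)
    ultimately have "norm z \<le> norm y + norm g + norm b" by linarith
    also have "\<dots> \<le> norm y + (L + r0)" using ng nb by simp
    also have "\<dots> \<le> (L + r0 + 1) * (1 + norm x + norm y)"
    proof -
      have "(L + r0 + 1) * (1 + norm x + norm y) = (L + r0 + 1) + (L + r0 + 1) * norm x + (L + r0) * norm y + norm y"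
        by (simp add: algebra_simps)
      moreover have "(L + r0 + 1) * norm x \<ge> 0" "(L + r0) * norm y \<ge> 0" using L0 r0 by simp_all
      ultimately show ?thesis by linarith
    qed
    finally show "norm z \<le> (L + r0 + 1) * (1 + norm x + norm y)" .
  qed
  show "\<forall>(x, y)\<in>X \<times> UNIV. \<forall>z\<in>{- (y - g) + b | g b. g \<in> clarke_subdiff f x \<and> b \<in> cball 0 r0}.
      norm z \<le> (L + r0 + 1) * (1 + norm x + norm y)"
    using H by blast
  qed
next
  show "\<forall>xs ys zs x y z.
       (\<forall>n. (xs n, ys n) \<in> X \<times> UNIV \<and>
            zs n \<in> {- (ys n - g) + b | g b. g \<in> clarke_subdiff f (xs n) \<and> b \<in> cball 0 r0}) \<and>
       xs \<longlonglongrightarrow> x \<and> ys \<longlonglongrightarrow> y \<and> zs \<longlonglongrightarrow> z \<and> (x, y) \<in> X \<times> UNIV \<longrightarrow>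
       z \<in> {- (y - g) + b | g b. g \<in> clarke_subdiff f x \<and> b \<in> cball 0 r0}"
  proof (intro allI impI, elim conjE)
    fix xs ys zs :: "nat \<Rightarrow> 'a" and x y z :: 'a
    assume H: "\<forall>n. (xs n, ys n) \<in> X \<times> UNIV \<and>
            zs n \<in> {- (ys n - g) + b | g b. g \<in> clarke_subdiff f (xs n) \<and> b \<in> cball 0 r0}"
      and xs: "xs \<longlonglongrightarrow> x" and ys: "ys \<longlonglongrightarrow> y" and zs: "zs \<longlonglongrightarrow> z"
    have "\<forall>n. \<exists>g. g \<in> clarke_subdiff f (xs n) \<and> zs n + ys n - g \<in> cball 0 r0"
    proof
      fix n
      obtain g b where "zs n = - (ys n - g) + b" "g \<in> clarke_subdiff f (xs n)" "b \<in> cball 0 r0"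
        using H by blast
      then show "\<exists>g. g \<in> clarke_subdiff f (xs n) \<and> zs n + ys n - g \<in> cball 0 r0"
        by (intro exI[of _ g]) (simp add: algebra_simps)
    qed
    then obtain G where G: "\<And>n. G n \<in> clarke_subdiff f (xs n)" "\<And>n. zs n + ys n - G n \<in> cball 0 r0"
      by (metis choice)
    have "\<forall>n. G n \<in> cball 0 L" using G(1) clarke_sub_cball[OF L] by blast
    then obtain g r where r: "strict_mono r" "(G \<circ> r) \<longlonglongrightarrow> g" "g \<in> cball 0 L"
      by (rule seq_compactE[OF compact_imp_seq_compact[OF compact_cball]])
    have gx: "g \<in> clarke_subdiff f x"
      by (rule clarke_usc[OF L LIMSEQ_subseq_LIMSEQ[OF xs r(1)] _ r(2)]) (simp add: G(1))
    have bl: "(\<lambda>n. (zs \<circ> r) n + (ys \<circ> r) n - (G \<circ> r) n) \<longlonglongrightarrow> z + y - g"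
      by (intro tendsto_intros LIMSEQ_subseq_LIMSEQ[OF zs r(1)] LIMSEQ_subseq_LIMSEQ[OF ys r(1)] r(2))
    have "norm (z + y - g) \<le> r0"
      by (rule tendsto_upperbound[OF tendsto_norm[OF bl]]) (use G(2) in \<open>auto intro: always_eventually\<close>)
    then show "z \<in> {- (y - g) + b | g b. g \<in> clarke_subdiff f x \<and> b \<in> cball 0 r0}"
      using gx by (intro CollectI exI[of _ g] exI[of _ "z + y - g"]) (auto simp: algebra_simps)
  qed
qed

theorem lemma2:
  fixes X :: "'a::euclidean_space set" and f :: "'a \<Rightarrow> real"
    and r :: "real \<Rightarrow> real" and lam :: real
  assumes "X \<noteq> {}" and "compact X" and "convex X"
    and "\<exists>L. L-lipschitz_on UNIV f"
    and "clarke_regular f"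
    and "\<forall>\<mu>>0. r \<mu> \<ge> 0"
    and "(r \<longlongrightarrow> 0) (at_right 0)"
    and "\<forall>\<mu>>0. \<forall>x\<in>X. \<exists>g. has_grad (gauss_smooth f \<mu>) g x \<and>
            g \<in> {a + b | a b. a \<in> clarke_subdiff f x \<and> b \<in> cball 0 (r \<mu>)}"
    and "lam > 0"
  shows "marchaud (X \<times> UNIV)
           (\<lambda>x y. {- (y + \<eta>) | \<eta>. \<eta> \<in> normal_cone X x \<and> norm \<eta> \<le> 2 * norm y})
       \<and> marchaud (X \<times> UNIV)
           (\<lambda>x y. {- (y - g) + b | g b. g \<in> clarke_subdiff f x \<and> b \<in> cball 0 (r lam)})"
proof -
  obtain L where L: "L-lipschitz_on UNIV f" using assms(4) by blast
  have r0: "r lam \<ge> 0" using assms(6) assms(9) by blast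
  have ne: "clarke_subdiff f x \<noteq> {}" if "x \<in> X" for x
  proof -
    obtain g where "g \<in> {a + b | a b. a \<in> clarke_subdiff f x \<and> b \<in> cball 0 (r lam)}"
      using assms(8) assms(9) \<open>x \<in> X\<close> by blast
    then show ?thesis by blast
  qed
  show ?thesis
    by (rule conjI[OF H1_marchaud H2_marchaud[OF L r0 ne]])
qed

end
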